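(* Let $S$ be an optimal $n$-town placed in normalized position. If $i\ge0$ and $S$ contains the points $(i,c_i^+)$ and $(i,c_i^-)$, then every grid point of the rectangle $[-i,i]\times[c_i^-,c_i^+]$ belongs to $S$. Similarly, if $i\ge1$ and $S$ contains the points $(-i,c_{-i}^+)$ and $(-i,c_{-i}^-)$, then every grid point of the rectangle $[-i,i-1]\times[c_{-i}^-,c_{-i}^+]$ belongs to $S$.
   Context: An $n$-town is a set $S\subset\mathbb{Z}\times\mathbb{Z}$ of exactly $n$ distinct grid points; its cost is $c(S)=\frac12\sum_{s\in S}\sum_{t\in S}\|s-t\|_1$ (Manhattan distance), and it is optimal if its cost is minimum among all $n$-towns. Rows $R_i=\{(x,i)\in S\}$ and columns $C_i=\{(i,y)\in S\}$; the center of a nonempty row (column) is the midpoint between its extreme points. $S$ is in normalized position if the centers of all rows of odd cardinality lie on the $y$-axis, the centers of all rows of even cardinality lie on the line $x=-\frac12$, the centers of all columns of odd cardinality lie on the $x$-axis, and the centers of all columns of even cardinality lie on the line $y=-\frac12$. For a nonempty column $C_i$, $c_i^+$ and $c_i^-$ denote the $y$-coordinates of its topmost and bottommost points. *)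

theory Defs
  imports Complex_Main
begin

type_synonym point = "int \<times> int"

definition is_town :: "nat \<Rightarrow> point set \<Rightarrow> bool" where
  "is_town n S \<longleftrightarrow> finite S \<and> card S = n"

definition manh :: "point \<Rightarrow> point \<Rightarrow> int" where
  "manh s t = \<bar>fst s - fst t\<bar> + \<bar>snd s - snd t\<bar>"

definition cost :: "point set \<Rightarrow> real" where
  "cost S = (1/2) * (\<Sum>s\<in>S. \<Sum>t\<in>S. real_of_int (manh s t))"

definition optimal_town :: "nat \<Rightarrow> point set \<Rightarrow> bool" where
  "optimal_town n S \<longleftrightarrow> is_town n S \<and> (\<forall>T. is_town n T \<longrightarrow> cost S \<le> cost T)"

definition row :: "point set \<Rightarrow> int \<Rightarrow> point set" where
  "row S i = {p \<in> S. snd p = i}"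

definition col :: "point set \<Rightarrow> int \<Rightarrow> point set" where
  "col S i = {p \<in> S. fst p = i}"

definition row_center :: "point set \<Rightarrow> int \<Rightarrow> real" where
  "row_center S i = (real_of_int (Min (fst ` row S i)) + real_of_int (Max (fst ` row S i))) / 2"

definition col_center :: "point set \<Rightarrow> int \<Rightarrow> real" where
  "col_center S i = (real_of_int (Min (snd ` col S i)) + real_of_int (Max (snd ` col S i))) / 2"

definition normalized :: "point set \<Rightarrow> bool" where
  "normalized S \<longleftrightarrow>
     (\<forall>i. row S i \<noteq> {} \<longrightarrow>
        (odd (card (row S i)) \<longrightarrow> row_center S i = 0) \<and>
        (even (card (row S i)) \<longrightarrow> row_center S i = -1/2)) \<and>
     (\<forall>i. col S i \<noteq> {} \<longrightarrow>
        (odd (card (col S i)) \<longrightarrow> col_center S i = 0) \<and>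
        (even (card (col S i)) \<longrightarrow> col_center S i = -1/2))"

definition cplus :: "point set \<Rightarrow> int \<Rightarrow> int" where
  "cplus S i = Max (snd ` col S i)"

definition cminus :: "point set \<Rightarrow> int \<Rightarrow> int" where
  "cminus S i = Min (snd ` col S i)"

end

theory Submission
  imports Defs
begin

lemma manh_sym: "manh s t = manh t s"
  unfolding manh_def by simp

lemma manh_self: "manh s s = 0"
  unfolding manh_def by simp

lemma cost_insert:
  assumes "finite A" "q \<notin> A"
  shows "cost (insert q A) = cost A + (\<Sum>t\<in>A. real_of_int (manh q t))"
proof -
  have "(\<Sum>s\<in>insert q A. \<Sum>t\<in>insert q A. real_of_int (manh s t))
      = (\<Sum>t\<in>insert q A. real_of_int (manh q t)) + (\<Sum>s\<in>A. \<Sum>t\<in>insert q A. real_of_int (manh s t))"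
    using assms by (simp add: sum.insert)
  also have "(\<Sum>t\<in>insert q A. real_of_int (manh q t)) = (\<Sum>t\<in>A. real_of_int (manh q t))"
    using assms by (simp add: sum.insert manh_self)
  also have "(\<Sum>s\<in>A. \<Sum>t\<in>insert q A. real_of_int (manh s t))
      = (\<Sum>s\<in>A. real_of_int (manh q s) + (\<Sum>t\<in>A. real_of_int (manh s t)))"
    using assms by (intro sum.cong) (auto simp: sum.insert manh_sym)
  also have "\<dots> = (\<Sum>s\<in>A. real_of_int (manh q s)) + (\<Sum>s\<in>A. \<Sum>t\<in>A. real_of_int (manh s t))"
    by (simp add: sum.distrib)
  finally show ?thesis unfolding cost_def by simp
qed

lemma opt_move:
  assumes "optimal_town n S" "p \<in> S" "q \<notin> S"
  shows "(\<Sum>t\<in>S-{p}. manh p t) \<le> (\<Sum>t\<in>S-{p}. manh q t)"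
proof -
  have fin: "finite S" and cS: "card S = n" using assms(1) unfolding optimal_town_def is_town_def by auto
  define A where "A = S - {p}"
  have finA: "finite A" using fin A_def by auto
  have SA: "S = insert p A" using assms(2) A_def by auto
  have pA: "p \<notin> A" "q \<notin> A" using A_def assms(3) by auto
  have "is_town n (insert q A)"
    unfolding is_town_def using finA pA cS SA by (simp add: card_insert_if)
  hence "cost S \<le> cost (insert q A)" using assms(1) unfolding optimal_town_def by auto
  hence "cost (insert p A) \<le> cost (insert q A)" using SA by simp
  hence "(\<Sum>t\<in>A. real_of_int (manh p t)) \<le> (\<Sum>t\<in>A. real_of_int (manh q t))"
    using cost_insert[OF finA pA(1)] cost_insert[OF finA pA(2)] by simp
  hence "real_of_int (\<Sum>t\<in>A. manh p t) \<le> real_of_int (\<Sum>t\<in>A. manh q t)" by simp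
  thus ?thesis unfolding A_def by linarith
qed

lemma no_gap:
  assumes opt: "optimal_town n S" and p1: "p1 \<in> S" and p2: "p2 \<in> S" and ne: "p1 \<noteq> p2"
    and q: "q \<notin> S" and al: "(\<alpha>::int) > 0" and be: "(\<beta>::int) > 0"
    and pw: "\<And>t. (\<alpha>+\<beta>) * manh q t \<le> \<alpha> * manh p1 t + \<beta> * manh p2 t"
    and lt: "\<alpha> * manh q p2 + \<beta> * manh q p1 < (\<alpha>+\<beta>) * manh p1 p2"
  shows False
proof -
  have fin: "finite S" using opt unfolding optimal_town_def is_town_def by auto
  define A where "A = S - {p1, p2}"
  have finA: "finite A" using fin A_def by auto
  have e1: "S - {p1} = insert p2 A" using A_def p2 ne by auto
  have e2: "S - {p2} = insert p1 A" using A_def p1 ne by auto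
  have n1: "p2 \<notin> A" "p1 \<notin> A" using A_def by auto
  have I1: "manh p1 p2 + (\<Sum>t\<in>A. manh p1 t) \<le> manh q p2 + (\<Sum>t\<in>A. manh q t)"
    using opt_move[OF opt p1 q] unfolding e1 using finA n1 by simp
  have I2: "manh p2 p1 + (\<Sum>t\<in>A. manh p2 t) \<le> manh q p1 + (\<Sum>t\<in>A. manh q t)"
    using opt_move[OF opt p2 q] unfolding e2 using finA n1 by simp
  have PW: "(\<alpha>+\<beta>) * (\<Sum>t\<in>A. manh q t) \<le> \<alpha> * (\<Sum>t\<in>A. manh p1 t) + \<beta> * (\<Sum>t\<in>A. manh p2 t)"
    using pw by (simp add: sum_distrib_left sum.distrib[symmetric] sum_mono)
  have "\<alpha> * (manh p1 p2 + (\<Sum>t\<in>A. manh p1 t)) \<le> \<alpha> * (manh q p2 + (\<Sum>t\<in>A. manh q t))"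
    using I1 al by simp
  moreover have "\<beta> * (manh p2 p1 + (\<Sum>t\<in>A. manh p2 t)) \<le> \<beta> * (manh q p1 + (\<Sum>t\<in>A. manh q t))"
    using I2 be by simp
  ultimately show False using PW lt manh_sym[of p2 p1] by (simp add: algebra_simps)
qed

lemma conv_ineq:
  fixes a b x u :: int
  assumes "a < x" "x < b"
  shows "(b - a) * \<bar>x - u\<bar> \<le> (b - x) * \<bar>a - u\<bar> + (x - a) * \<bar>b - u\<bar>"
proof -
  have "(b - a) * (x - u) = (b - x) * (a - u) + (x - a) * (b - u)" by (simp add: algebra_simps)
  hence "\<bar>(b - a) * (x - u)\<bar> \<le> \<bar>(b - x) * (a - u)\<bar> + \<bar>(x - a) * (b - u)\<bar>"
    by (metis abs_triangle_ineq)
  thus ?thesis using assms by (simp add: abs_mult)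
qed

lemma row_conv:
  assumes opt: "optimal_town n S" and "(a, y) \<in> S" "(b, y) \<in> S" "a \<le> x" "x \<le> b"
  shows "(x, y) \<in> S"
proof (rule ccontr)
  assume q: "(x, y) \<notin> S"
  hence ax: "a < x" "x < b" using assms by (auto simp: order.order_iff_strict)
  show False
  proof (rule no_gap[OF opt assms(2,3) _ q, of "b - x" "x - a"])
    show "(a, y) \<noteq> (b, y)" using ax by auto
    show "b - x > 0" "x - a > 0" using ax by auto
    fix t :: point
    have "(b - x + (x - a)) * \<bar>snd t - y\<bar> = (b - x) * \<bar>snd t - y\<bar> + (x - a) * \<bar>snd t - y\<bar>"
      by (simp add: algebra_simps)
    moreover have "(b - x + (x - a)) * \<bar>x - fst t\<bar> \<le> (b - x) * \<bar>a - fst t\<bar> + (x - a) * \<bar>b - fst t\<bar>"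
      using conv_ineq[OF ax] by simp
    ultimately show "(b - x + (x - a)) * manh (x, y) t \<le> (b - x) * manh (a, y) t + (x - a) * manh (b, y) t"
      unfolding manh_def by (simp add: algebra_simps abs_minus_commute)
  next
    have "(b - x) * (b - x) + (x - a) * (x - a) < (b - x + (x - a)) * (b - a)"
    proof -
      have "0 < (b - x) * (x - a)" using ax by simp
      thus ?thesis by (simp add: algebra_simps)
    qed
    thus "(b - x) * manh (x, y) (b, y) + (x - a) * manh (x, y) (a, y) < (b - x + (x - a)) * manh (a, y) (b, y)"
      using ax unfolding manh_def by simp
  qed
qed

lemma col_conv:
  assumes opt: "optimal_town n S" and "(y, a) \<in> S" "(y, b) \<in> S" "a \<le> x" "x \<le> b"
  shows "(y, x) \<in> S"
proof (rule ccontr)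
  assume q: "(y, x) \<notin> S"
  hence ax: "a < x" "x < b" using assms by (auto simp: order.order_iff_strict)
  show False
  proof (rule no_gap[OF opt assms(2,3) _ q, of "b - x" "x - a"])
    show "(y, a) \<noteq> (y, b)" using ax by auto
    show "b - x > 0" "x - a > 0" using ax by auto
    fix t :: point
    have "(b - x + (x - a)) * \<bar>fst t - y\<bar> = (b - x) * \<bar>fst t - y\<bar> + (x - a) * \<bar>fst t - y\<bar>"
      by (simp add: algebra_simps)
    moreover have "(b - x + (x - a)) * \<bar>x - snd t\<bar> \<le> (b - x) * \<bar>a - snd t\<bar> + (x - a) * \<bar>b - snd t\<bar>"
      using conv_ineq[OF ax] by simp
    ultimately show "(b - x + (x - a)) * manh (y, x) t \<le> (b - x) * manh (y, a) t + (x - a) * manh (y, b) t"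
      unfolding manh_def by (simp add: algebra_simps abs_minus_commute)
  next
    have "(b - x) * (b - x) + (x - a) * (x - a) < (b - x + (x - a)) * (b - a)"
    proof -
      have "0 < (b - x) * (x - a)" using ax by simp
      thus ?thesis by (simp add: algebra_simps)
    qed
    thus "(b - x) * manh (y, x) (y, b) + (x - a) * manh (y, x) (y, a) < (b - x + (x - a)) * manh (y, a) (y, b)"
      using ax unfolding manh_def by simp
  qed
qed


lemma row_ext:
  assumes fin: "finite S" and nm: "normalized S" and p: "(i, y) \<in> S"
  shows "\<exists>lo hi. (lo, y) \<in> S \<and> (hi, y) \<in> S \<and> lo \<le> i \<and> i \<le> hi \<and> -1 \<le> lo + hi \<and> lo + hi \<le> 0"
proof -
  define F where "F = fst ` row S y"
  have rne: "row S y \<noteq> {}" using p unfolding row_def by auto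
  have finF: "finite F" "F \<noteq> {}" using fin rne unfolding F_def row_def by auto
  have iF: "i \<in> F" using p unfolding F_def row_def by force
  have c: "row_center S y = 0 \<or> row_center S y = -1/2"
    using nm rne unfolding normalized_def by blast
  hence c2: "real_of_int (Min F + Max F) = 0 \<or> real_of_int (Min F + Max F) = -1"
    unfolding row_center_def F_def by auto
  have "Min F \<in> F" "Max F \<in> F" using finF by auto
  hence "(Min F, y) \<in> S" "(Max F, y) \<in> S" unfolding F_def row_def by auto
  moreover have "Min F \<le> i" "i \<le> Max F" using finF iF by auto
  moreover have "-1 \<le> Min F + Max F \<and> Min F + Max F \<le> 0" using c2 by linarith
  ultimately show ?thesis by blast
qed

theorem lemma6:
  fixes n :: nat and S :: "point set"
  assumes "optimal_town n S" and "normalized S"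
  shows "(\<forall>i::int. i \<ge> 0 \<and> col S i \<noteq> {} \<and> (i, cplus S i) \<in> S \<and> (i, cminus S i) \<in> S \<longrightarrow>
            (\<forall>x y. -i \<le> x \<and> x \<le> i \<and> cminus S i \<le> y \<and> y \<le> cplus S i \<longrightarrow> (x, y) \<in> S))
       \<and> (\<forall>i::int. i \<ge> 1 \<and> col S (-i) \<noteq> {} \<and> (-i, cplus S (-i)) \<in> S \<and> (-i, cminus S (-i)) \<in> S \<longrightarrow>
            (\<forall>x y. -i \<le> x \<and> x \<le> i - 1 \<and> cminus S (-i) \<le> y \<and> y \<le> cplus S (-i) \<longrightarrow> (x, y) \<in> S))"
proof -
  have fin: "finite S" using assms(1) unfolding optimal_town_def is_town_def by auto
  note opt = assms(1) and nm = assms(2)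
  show ?thesis
  proof (intro conjI allI impI)
    fix i x y assume h: "0 \<le> i \<and> col S i \<noteq> {} \<and> (i, cplus S i) \<in> S \<and> (i, cminus S i) \<in> S"
      and r: "-i \<le> x \<and> x \<le> i \<and> cminus S i \<le> y \<and> y \<le> cplus S i"
    have "(i, y) \<in> S" using col_conv[OF opt, of i "cminus S i" "cplus S i" y] h r by auto
    then obtain lo hi where "(lo, y) \<in> S" "(hi, y) \<in> S" "lo \<le> i" "i \<le> hi" "-1 \<le> lo + hi" "lo + hi \<le> 0"
      using row_ext[OF fin nm] by blast
    thus "(x, y) \<in> S" using row_conv[OF opt, of lo y hi x] h r by auto
  next
    fix i x y assume h: "1 \<le> i \<and> col S (-i) \<noteq> {} \<and> (-i, cplus S (-i)) \<in> S \<and> (-i, cminus S (-i)) \<in> S"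
      and r: "-i \<le> x \<and> x \<le> i - 1 \<and> cminus S (-i) \<le> y \<and> y \<le> cplus S (-i)"
    have "(-i, y) \<in> S" using col_conv[OF opt, of "-i" "cminus S (-i)" "cplus S (-i)" y] h r by auto
    then obtain lo hi where "(lo, y) \<in> S" "(hi, y) \<in> S" "lo \<le> -i" "-i \<le> hi" "-1 \<le> lo + hi" "lo + hi \<le> 0"
      using row_ext[OF fin nm] by blast
    thus "(x, y) \<in> S" using row_conv[OF opt, of lo y hi x] h r by auto
  qed
qed

end
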